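(* There exist infinitely many distinct rational numbers $r>1$ such that, for each of them, there is a circle $(x-h)^2+y^2=a^2$ with $h,a\in\mathbb{Q}$, $a>0$, carrying four rational points $P_i=(x_i,y_i)$, $i=1,\dots,4$, none of which lies on the $x$-axis, with $x_i>0$ and $x_{i+1}=r\,x_i$ for $i=1,2,3$, and such that $P_1$ and $P_4$ are symmetric with respect to the diameter of the circle parallel to the $y$-axis, i.e. $x_1+x_4=2h$ and $y_1=y_4$.
   Context: Rational points are points with both coordinates in $\mathbb{Q}$. *)

theory Defs
  imports Complex_Main
begin

definition good_ratio :: "rat \<Rightarrow> bool" where
  "good_ratio r \<longleftrightarrow> (\<exists>h a :: rat. a > 0 \<and> (\<exists>x y :: nat \<Rightarrow> rat.
      (\<forall>i\<in>{1..4}. (x i - h)^2 + (y i)^2 = a^2 \<and> y i \<noteq> 0 \<and> x i > 0) \<and>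
      (\<forall>i\<in>{1..3}. x (i+1) = r * x i) \<and>
      x 1 + x 4 = 2 * h \<and> y 1 = y 4))"

end

theory Submission
  imports Defs
begin

lemma good_of_E:
  fixes r u v :: rat
  assumes r1: "r > 1" and hu: "u^2 = r^2 + r + 4" and hv: "v^2 = 4*r^2 + r + 1"
  shows "good_ratio r"
proof -
  define h where "h = (1 + r^3)/2"
  define a where "a = 5/6*(r^3 - 1)"
  define x where "x = (\<lambda>i::nat. r^(i-1))"
  define y where "y = (\<lambda>i::nat. if i = 2 then (r-1)*(2*r+1)*u/3
                          else if i = 3 then (r-1)*(r+2)*v/3 else 2/3*(r^3-1))"
  have r3: "r^3 > 1" using r1 by (simp add: one_less_power)
  have apos: "a > 0" unfolding a_def using r3 by simp
  have u0: "u \<noteq> 0"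
  proof
    assume "u = 0" then have "r^2 + r + 4 = 0" using hu by simp
    moreover have "r^2 + r + 4 > 0" using r1 by (simp add: add_pos_pos)
    ultimately show False by simp
  qed
  have v0: "v \<noteq> 0"
  proof
    assume "v = 0" then have "4*r^2 + r + 1 = 0" using hv by simp
    moreover have "4*r^2 + r + 1 > 0" using r1 by (simp add: add_pos_pos)
    ultimately show False by simp
  qed
  have c1: "(x 1 - h)^2 + (y 1)^2 = a^2"
    unfolding x_def y_def h_def a_def by (simp add: power2_eq_square power3_eq_cube field_simps; algebra)
  have c2: "(x 2 - h)^2 + (y 2)^2 = a^2"
  proof -
    have "(y 2)^2 = (r-1)^2*(2*r+1)^2*(r^2+r+4)/9" unfolding y_def
      by (simp add: power_mult_distrib power_divide hu[symmetric])
    then show ?thesis unfolding x_def h_def a_def by (simp add: field_simps; algebra)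
  qed
  have c3: "(x 3 - h)^2 + (y 3)^2 = a^2"
  proof -
    have "(y 3)^2 = (r-1)^2*(r+2)^2*(4*r^2+r+1)/9" unfolding y_def
      by (simp add: power_mult_distrib power_divide hv[symmetric])
    then show ?thesis unfolding x_def h_def a_def by (simp add: field_simps; algebra)
  qed
  have c4: "(x 4 - h)^2 + (y 4)^2 = a^2"
    unfolding x_def y_def h_def a_def by (simp add: field_simps; algebra)
  have ny1: "y 1 \<noteq> 0" "y 4 \<noteq> 0" unfolding y_def using r3 by auto
  have ny2: "y 2 \<noteq> 0" unfolding y_def using r1 u0 by auto
  have ny3: "y 3 \<noteq> 0" unfolding y_def using r1 v0 by auto
  have xp: "\<And>i. x i > 0" unfolding x_def using r1 by simp
  have S4: "{1..4::nat} = {1,2,3,4}" by auto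
  have S3: "{1..3::nat} = {1,2,3}" by auto
  have geo: "\<forall>i\<in>{1..3}. x (i+1) = r * x i"
    unfolding S3 x_def by (simp add: power2_eq_square power3_eq_cube)
  have sym: "x 1 + x 4 = 2*h" "y 1 = y 4" unfolding x_def h_def y_def by simp_all
  show ?thesis unfolding good_ratio_def
    apply (rule exI[of _ h], rule exI[of _ a])
    apply (intro conjI apos)
    apply (rule exI[of _ x], rule exI[of _ y])
    using c1 c2 c3 c4 ny1 ny2 ny3 xp geo sym unfolding S4 by auto
qed

lemma no_sqrt6: "(u::rat)^2 \<noteq> 6"
proof
  assume h: "u^2 = 6"
  obtain p q where pq: "quotient_of u = (p, q)" by (cases "quotient_of u")
  have q0: "q > 0" using pq by (rule quotient_of_denom_pos)
  have cop: "coprime p q" using pq by (rule quotient_of_coprime)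
  have ud: "u = of_int p / of_int q" using pq by (rule quotient_of_div)
  have "(of_int p / of_int q :: rat)^2 = 6" using h ud by simp
  then have "(of_int p :: rat)^2 = 6 * (of_int q)^2" using q0 by (simp add: field_simps power_divide)
  then have e: "p^2 = 6*q^2" by (metis of_int_eq_iff of_int_mult of_int_numeral of_int_power)
  then have "even (p^2)" by simp
  then have ep: "even p" by simp
  then obtain k where k: "p = 2*k" by blast
  have "2*k^2 = 3*q^2" using e k by (simp add: power_mult_distrib)
  then have "even (3*q^2)" by (metis dvd_triv_left)
  then have eq: "even q" by simp
  show False using cop ep eq by (metis coprime_common_divisor not_coprimeI odd_one)
qed

lemma E_inv:
  fixes r u v :: rat
  assumes "r > 0" "u^2 = r^2 + r + 4" "v^2 = 4*r^2 + r + 1"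
  shows "(v/r)^2 = (1/r)^2 + 1/r + 4" "(u/r)^2 = 4*(1/r)^2 + 1/r + 1"
proof -
  have r0: "r \<noteq> 0" using assms(1) by simp
  have "(v/r)^2 = v^2/r^2" by (simp add: power_divide)
  also have "\<dots> = (4*r^2 + r + 1)/r^2" using assms(3) by simp
  also have "\<dots> = (1/r)^2 + 1/r + 4" using r0 by (simp add: field_simps power2_eq_square)
  finally show "(v/r)^2 = (1/r)^2 + 1/r + 4" .
  have "(u/r)^2 = u^2/r^2" by (simp add: power_divide)
  also have "\<dots> = (r^2 + r + 4)/r^2" using assms(2) by simp
  also have "\<dots> = 4*(1/r)^2 + 1/r + 1" using r0 by (simp add: field_simps power2_eq_square)
  finally show "(u/r)^2 = 4*(1/r)^2 + 1/r + 1" .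
qed

lemma fin_quad:
  fixes a b c :: rat
  assumes "a \<noteq> 0 \<or> b \<noteq> 0"
  shows "finite {t. a*t^2 + b*t + c = 0}"
proof (cases "{t. a*t^2 + b*t + c = 0} = {}")
  case True then show ?thesis by simp
next
  case False
  then obtain t0 where t0: "a*t0^2 + b*t0 + c = 0" by auto
  show ?thesis
  proof (cases "a = 0")
    case True
    then have b: "b \<noteq> 0" using assms by simp
    have "{t. a*t^2 + b*t + c = 0} \<subseteq> {t0}"
    proof
      fix t assume "t \<in> {t. a*t^2 + b*t + c = 0}"
      then have "b*t + c = 0" "b*t0 + c = 0" using t0 True by simp_all
      then have "b*t = b*t0" by linarith
      then show "t \<in> {t0}" using b by simp
    qed
    then show ?thesis using finite_subset by blast
  next
    case False
    have "{t. a*t^2 + b*t + c = 0} \<subseteq> {t0, -b/a - t0}"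
    proof
      fix t assume "t \<in> {t. a*t^2 + b*t + c = 0}"
      then have "a*t^2 + b*t + c = 0" by simp
      then have "(t - t0)*(a*(t+t0) + b) = 0" using t0 by (simp add: algebra_simps power2_eq_square)
      then have "t = t0 \<or> a*(t+t0) + b = 0" by simp
      then show "t \<in> {t0, -b/a - t0}" using False by (auto simp: field_simps)
    qed
    then show ?thesis using finite_subset by blast
  qed
qed

lemma fib_fin:
  fixes r :: rat
  shows "finite {c. \<exists>t v. (1+r)*t^2 + 4*t - r = 0 \<and> v^2 = 4*r^2+r+1 \<and> c = 8*t^2+28*t-4*v*(1-t^2)}"
proof -
  have T: "finite {t. (1+r)*t^2 + 4*t + (-r) = 0}" by (rule fin_quad) simp
  have V: "finite {v. 1*v^2 + 0*v + (-(4*r^2+r+1)) = 0}" by (rule fin_quad) simp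
  have "{c. \<exists>t v. (1+r)*t^2 + 4*t - r = 0 \<and> v^2 = 4*r^2+r+1 \<and> c = 8*t^2+28*t-4*v*(1-t^2)}
     \<subseteq> (\<lambda>(t,v). 8*t^2+28*t-4*v*(1-t^2)) ` ({t. (1+r)*t^2 + 4*t + (-r) = 0} \<times> {v. 1*v^2 + 0*v + (-(4*r^2+r+1)) = 0})"
    by (auto simp: image_iff)
  then show ?thesis using T V finite_subset by blast
qed

lemma hu_lem:
  fixes t w :: rat
  assumes w0: "w \<noteq> 0" and w: "w = 1 - t^2"
  shows "(2 + t*(t*(t+4)/w + 1))^2 = (t*(t+4)/w)^2 + t*(t+4)/w + 4"
proof -
  have e1: "(2 + t*(t*(t+4)/w + 1)) = (2*w + t*(t*(t+4) + w))/w" using w0 by (simp add: field_simps)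
  have e2: "(2*w + t*(t*(t+4) + w))^2 = (t*(t+4))^2 + t*(t+4)*w + 4*w^2" unfolding w by algebra
  have e3: "(t*(t+4)/w)^2 + t*(t+4)/w + 4 = ((t*(t+4))^2 + t*(t+4)*w + 4*w^2)/w^2"
    using w0 by (simp add: field_simps power2_eq_square)
  have "(2 + t*(t*(t+4)/w + 1))^2 = (2*w + t*(t*(t+4) + w))^2/w^2" unfolding e1 by (simp add: power_divide)
  also have "\<dots> = ((t*(t+4))^2 + t*(t+4)*w + 4*w^2)/w^2" unfolding e2 ..
  finally show ?thesis unfolding e3 .
qed
lemma hv_lem:
  fixes t w :: rat
  assumes w0: "w \<noteq> 0" and w: "w = 1 - t^2"
  shows "(4*t^4 + 28*t^3 + 63*t^2 + 4*t + 1)/w^2 = 4*(t*(t+4)/w)^2 + t*(t+4)/w + 1"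
proof -
  have e2: "4*t^4 + 28*t^3 + 63*t^2 + 4*t + 1 = 4*(t*(t+4))^2 + t*(t+4)*w + w^2" unfolding w by algebra
  have e3: "4*(t*(t+4)/w)^2 + t*(t+4)/w + 1 = (4*(t*(t+4))^2 + t*(t+4)*w + w^2)/w^2"
    using w0 by (simp add: field_simps power2_eq_square)
  show ?thesis unfolding e3 e2 ..
qed
lemma hq_lem:
  fixes t w :: rat
  assumes w0: "w \<noteq> 0" and w: "w = 1 - t^2"
  shows "(1 + t*(t+4)/w)*t^2 + 4*t - t*(t+4)/w = 0"
proof -
  have e1: "(1 + t*(t+4)/w)*t^2 + 4*t - t*(t+4)/w = ((w + t*(t+4))*t^2 + 4*t*w - t*(t+4))/w"
    using w0 by (simp add: field_simps)
  have e2: "(w + t*(t+4))*t^2 + 4*t*w - t*(t+4) = 0" unfolding w by algebra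
  show ?thesis unfolding e1 e2 by simp
qed

lemma W_to_E:
  fixes x y :: rat
  assumes cur: "y^2 = x^3 + 63*x^2 + 96*x - 160" and x4: "4 < x" and x76: "x < 76"
  shows "\<exists>r u v t. r > 0 \<and> u^2 = r^2+r+4 \<and> v^2 = 4*r^2+r+1 \<and> (1+r)*t^2+4*t-r = 0
           \<and> x = 8*t^2+28*t-4*v*(1-t^2)"
proof -
  define d where "d = 4*x + 56"
  define \<alpha> where "\<alpha> = 8 + 7*x + y"
  define \<beta> where "\<beta> = 216 + 9*x - y"
  define \<gamma> where "\<gamma> = 64 + 11*x + y"
  define \<delta> where "\<delta> = 48 - 3*x - y"
  define E1 where "E1 = x^2 + 136*x + 88 + 18*y"
  define E2 where "E2 = x^2 - 8*x + 232 - 6*y"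
  have d0: "d > 0" unfolding d_def using x4 by simp
  have id1: "\<alpha>*\<gamma> = (x+4)*E1" unfolding \<alpha>_def \<gamma>_def E1_def using cur by algebra
  have id2: "\<beta>*\<delta> = (x+44)*E2" unfolding \<beta>_def \<delta>_def E2_def using cur by algebra
  have D1: "(x^2+136*x+88 + 18*y)*(x^2+136*x+88 - 18*y) = (x-4)*(x-76)*(x+14)^2" using cur by algebra
  have D2: "(x^2-8*x+232 - 6*y)*(x^2-8*x+232 + 6*y) = (x-4)*(x-76)*(x+14)^2" using cur by algebra
  have ng: "(x-4)*(x-76)*(x+14)^2 < 0"
  proof -
    have "(x-4)*(x-76) < 0" using x4 x76 by (simp add: mult_pos_neg)
    moreover have "(x+14)^2 > 0" using x4 by simp
    ultimately show ?thesis by (simp add: mult_neg_pos)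
  qed
  have xx2: "x^2 > 0" "x^3 > 0" using x4 by simp_all
  have sq4: "x^2 - 8*x + 232 = (x-4)^2 + 216" by (simp add: power2_eq_square algebra_simps)
  have sq4': "(x-4)^2 \<ge> 0" by simp
  have fpos: "y^2 > 0" unfolding cur using x4 xx2 by linarith
  have E12: "E1*E2 < 0"
  proof (cases "y > 0")
    case True
    have e1: "E1 > 0" unfolding E1_def using True x4 xx2 by linarith
    have "x^2-8*x+232 + 6*y > 0" using True sq4 sq4' by linarith
    then have "E2 < 0" using D2 ng unfolding E2_def by (metis mult_less_0_iff not_less_iff_gr_or_eq)
    then show ?thesis using e1 by (simp add: mult_pos_neg)
  next
    case False
    then have yn: "y < 0" using fpos by (cases "y = 0") auto
    have e2: "E2 > 0" unfolding E2_def using yn sq4 sq4' by linarith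
    have "x^2+136*x+88 - 18*y > 0" using yn x4 xx2 by linarith
    then have "E1 < 0" using D1 ng unfolding E1_def by (metis mult_less_0_iff not_less_iff_gr_or_eq)
    then show ?thesis using e2 by (simp add: mult_neg_pos)
  qed
  have E1n: "E1 \<noteq> 0" and E2n: "E2 \<noteq> 0" using E12 by auto
  have g0: "\<gamma> \<noteq> 0" using id1 E1n x4 by auto
  have dl0: "\<delta> \<noteq> 0" using id2 E2n x4 by auto
  define t where "t = -\<alpha>/d"
  have t1: "1 - t = \<gamma>/d" unfolding t_def \<gamma>_def \<alpha>_def d_def using d0 by (simp add: field_simps d_def)
  have t2: "1 + t = \<delta>/d" unfolding t_def \<delta>_def \<alpha>_def using d0 by (simp add: field_simps d_def)
  have t3: "t + 4 = \<beta>/d" unfolding t_def \<beta>_def \<alpha>_def using d0 by (simp add: field_simps d_def)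
  have tt: "1 - t^2 = (\<gamma>*\<delta>)/d^2"
  proof -
    have "1 - t^2 = (1-t)*(1+t)" by (simp add: algebra_simps power2_eq_square)
    then show ?thesis using t1 t2 by (simp add: power2_eq_square)
  qed
  have tt0: "1 - t^2 \<noteq> 0" using tt g0 dl0 d0 by simp
  define r where "r = t*(t+4)/(1-t^2)"
  have rform: "r = -(\<alpha>*\<beta>)/(\<gamma>*\<delta>)"
    unfolding r_def tt t3 unfolding t_def using d0 g0 dl0 by (simp add: field_simps power2_eq_square)
  have "r = -((\<alpha>*\<gamma>)*(\<beta>*\<delta>))/((\<gamma>*\<delta>)^2)"
    unfolding rform using g0 dl0 by (simp add: field_simps power2_eq_square)
  also have "\<dots> = -((x+4)*(x+44)*(E1*E2))/((\<gamma>*\<delta>)^2)" unfolding id1 id2 by (simp add: algebra_simps)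
  finally have rf2: "r = -((x+4)*(x+44)*(E1*E2))/((\<gamma>*\<delta>)^2)" .
  have rpos: "r > 0"
  proof -
    have "(x+4)*(x+44) > 0" using x4 by simp
    then have n: "(x+4)*(x+44)*(E1*E2) < 0" using E12 by (simp add: mult_pos_neg)
    have p: "(\<gamma>*\<delta>)^2 > 0" using g0 dl0 by simp
    have "(x+4)*(x+44)*(E1*E2)/((\<gamma>*\<delta>)^2) < 0" by (rule divide_neg_pos[OF n p])
    then show ?thesis unfolding rf2 by (simp add: minus_divide_left[symmetric])
  qed
  define w where "w = 1 - t^2"
  have w0: "w \<noteq> 0" unfolding w_def by (rule tt0)
  have rw: "r = t*(t+4)/w" unfolding r_def w_def ..
  define u where "u = 2 + t*(r+1)"
  have hu: "u^2 = r^2 + r + 4"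
    unfolding u_def rw by (rule hu_lem[OF w0 w_def])
  define v where "v = (8*t^2 + 28*t - x)/(4*w)"
  have ty: "y = -t*d - 8 - 7*x" unfolding t_def \<alpha>_def using d0 by (simp add: field_simps)
  have rel: "d*(16*(4*t^4 + 28*t^3 + 63*t^2 + 4*t + 1) - (8*t^2 + 28*t - x)^2)
      = 4*(y^2 - (x^3 + 63*x^2 + 96*x - 160))"
    unfolding ty d_def by algebra
  have key: "(8*t^2 + 28*t - x)^2 = 16*(4*t^4 + 28*t^3 + 63*t^2 + 4*t + 1)"
  proof -
    have "d*(16*(4*t^4 + 28*t^3 + 63*t^2 + 4*t + 1) - (8*t^2 + 28*t - x)^2) = 0"
      unfolding rel cur by simp
    then show ?thesis using d0 by simp
  qed
  have hv: "v^2 = 4*r^2 + r + 1"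
  proof -
    have "v^2 = (8*t^2 + 28*t - x)^2/(16*w^2)" unfolding v_def by (simp add: power_divide power_mult_distrib)
    also have "\<dots> = (4*t^4 + 28*t^3 + 63*t^2 + 4*t + 1)/w^2" unfolding key by (rule mult_divide_mult_cancel_left) simp
    also have "\<dots> = 4*r^2 + r + 1" unfolding rw by (rule hv_lem[OF w0 w_def])
    finally show ?thesis .
  qed
  have hq: "(1+r)*t^2 + 4*t - r = 0" unfolding rw by (rule hq_lem[OF w0 w_def])
  have hx: "x = 8*t^2+28*t-4*v*(1-t^2)" unfolding v_def w_def[symmetric] using w0 by (simp add: field_simps)
  show ?thesis using rpos hu hv hq hx by blast
qed

lemma add_curve:
  fixes x y s L :: rat
  assumes cur: "y^2 = x^3 + 63*x^2 + 96*x - 160" and s2: "s^2 = 62500" and x26: "x \<noteq> 26"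
    and yL: "y = s + L*(x - 26)"
  defines "x3 \<equiv> L^2 - 89 - x"
  shows "(-(y + L*(x3 - x)))^2 = x3^3 + 63*x3^2 + 96*x3 - 160"
proof -
  have I: "(x-26)*((x3^3 + 63*x3^2 + 96*x3 - 160) - (s + L*(x3-26))^2)
      = (x3-26)*((x^3 + 63*x^2 + 96*x - 160) - (s + L*(x-26))^2)
        - (x3-x)*((26^3 + 63*26^2 + 96*26 - 160) - s^2)"
    unfolding x3_def by algebra
  have "(x^3 + 63*x^2 + 96*x - 160) - (s + L*(x-26))^2 = 0" using cur yL by simp
  moreover have "(26^3 + 63*26^2 + 96*26 - 160) - s^2 = (0::rat)" using s2 by simp
  ultimately have "(x-26)*((x3^3 + 63*x3^2 + 96*x3 - 160) - (s + L*(x3-26))^2) = 0" using I by simp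
  then have e: "(s + L*(x3-26))^2 = x3^3 + 63*x3^2 + 96*x3 - 160" using x26 by simp
  have eq: "-(y + L*(x3 - x)) = -(s + L*(x3-26))" using yL by (simp add: algebra_simps)
  show ?thesis unfolding eq power2_minus by (rule e)
qed

lemma prod_neg_between:
  fixes p :: rat
  assumes "(p - 4)*(p - 76) < 0"
  shows "4 < p \<and> p < 76"
proof (rule ccontr)
  assume "\<not> (4 < p \<and> p < 76)"
  then have "p \<le> 4 \<or> p \<ge> 76" by auto
  then have "(p - 4)*(p - 76) \<ge> 0"
  proof
    assume "p \<le> 4" then show ?thesis by (simp add: mult_nonpos_nonpos)
  next
    assume "p \<ge> 76" then show ?thesis by simp
  qed
  then show False using assms by simp
qed

lemma Q_pos:
  fixes x :: rat
  assumes "(1 \<le> x \<and> x \<le> 2) \<or> x \<ge> 364"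
  shows "11*x^4 - 2132*x^3 - 487420*x^2 + 1896192*x + 140224 > 0"
  using assms
proof
  assume h: "1 \<le> x \<and> x \<le> 2"
  have "x^3 \<le> 2^3" using h by (intro power_mono) auto
  then have "x^3 \<le> 8" by simp
  moreover have "x^2 \<le> 2^2" using h by (intro power_mono) auto
  then have "x^2 \<le> 4" by simp
  moreover have "x^4 \<ge> 0" by simp
  ultimately show ?thesis using h by linarith
next
  assume h: "x \<ge> 364"
  define t where "t = x - 364"
  have t0: "t \<ge> 0" using h unfolding t_def by simp
  have xt: "x = t + 364" unfolding t_def by simp
  have e: "11*x^4 - 2132*x^3 - 487420*x^2 + 1896192*x + 140224
     = 26392988160 + 921665952*t + 5929172*t^2 + 13884*t^3 + 11*t^4"
    unfolding xt by algebra
  have "t^2 \<ge> 0" "t^3 \<ge> 0" "t^4 \<ge> 0" using t0 by simp_all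
  then show ?thesis unfolding e using t0 by linarith
qed

lemma cover:
  fixes x y :: rat
  assumes cur: "y^2 = x^3 + 63*x^2 + 96*x - 160" and x1: "1 \<le> x"
    and out: "\<not> (4 < x \<and> x < 76)" and n4: "x \<noteq> 4" and n76: "x \<noteq> 76"
  shows "\<exists>s. s^2 = 62500 \<and> 4 < ((y-s)/(x-26))^2 - 89 - x \<and> ((y-s)/(x-26))^2 - 89 - x < 76"
proof -
  have x26: "x \<noteq> 26" using out by auto
  define D where "D = (x-26)^2"
  have D0: "D > 0" unfolding D_def using x26 by simp
  define A where "A = 26*x^2 + 4048*x + 2176"
  define \<rho>1 where "\<rho>1 = ((y-250)/(x-26))^2 - 89 - x"
  define \<rho>2 where "\<rho>2 = ((y-(-250))/(x-26))^2 - 89 - x"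
  have r1: "\<rho>1 * D = A - 500*y"
  proof -
    have "\<rho>1 * D = (y-250)^2 - (89 + x)*D" unfolding \<rho>1_def D_def using x26
      by (simp add: power_divide field_simps)
    also have "\<dots> = A - 500*y" unfolding A_def D_def using cur by algebra
    finally show ?thesis .
  qed
  have r2: "\<rho>2 * D = A + 500*y"
  proof -
    have "\<rho>2 * D = (y+250)^2 - (89 + x)*D" unfolding \<rho>2_def D_def using x26
      by (simp add: power_divide field_simps)
    also have "\<dots> = A + 500*y" unfolding A_def D_def using cur by algebra
    finally show ?thesis .
  qed
  define G1 where "G1 = (A - 500*y - 4*D)*(A - 500*y - 76*D)"
  define G2 where "G2 = (A + 500*y - 4*D)*(A + 500*y - 76*D)"
  have g1: "(\<rho>1 - 4)*(\<rho>1 - 76) * D^2 = G1" unfolding G1_def r1[symmetric]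
    by (simp add: algebra_simps power2_eq_square)
  have g2: "(\<rho>2 - 4)*(\<rho>2 - 76) * D^2 = G2" unfolding G2_def r2[symmetric]
    by (simp add: algebra_simps power2_eq_square)
  define \<Pi> where "\<Pi> = (121*x-196)*(x-76)*(x-4)*(x-364)"
  define Q where "Q = 11*x^4 - 2132*x^3 - 487420*x^2 + 1896192*x + 140224"
  have p1: "(A - 500*y - 4*D)*(A + 500*y - 4*D) = 4*D*(121*x-196)*(x-76)"
    unfolding A_def D_def using cur by algebra
  have p2: "(A - 500*y - 76*D)*(A + 500*y - 76*D) = 2500*D*(x-4)*(x-364)"
    unfolding A_def D_def using cur by algebra
  have GG: "G1*G2 = 10000*D^2*\<Pi>"
  proof -
    have "G1*G2 = ((A - 500*y - 4*D)*(A + 500*y - 4*D))*((A - 500*y - 76*D)*(A + 500*y - 76*D))"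
      unfolding G1_def G2_def by (simp add: algebra_simps)
    also have "\<dots> = 10000*D^2*\<Pi>" unfolding p1 p2 \<Pi>_def by (simp add: algebra_simps power2_eq_square)
    finally show ?thesis .
  qed
  have GS: "G1 + G2 = -200*Q" unfolding G1_def G2_def Q_def A_def D_def using cur by algebra
  have "G1 < 0 \<or> G2 < 0"
  proof (rule ccontr)
    assume "\<not> (G1 < 0 \<or> G2 < 0)"
    then have a1: "G1 \<ge> 0" "G2 \<ge> 0" by auto
    then have "G1*G2 \<ge> 0" by simp
    then have "10000*D^2*\<Pi> \<ge> 0" using GG by simp
    then have Pi0: "\<Pi> \<ge> 0" using D0 by (simp add: zero_le_mult_iff)
    have Q0: "Q \<le> 0" using GS a1 by simp
    show False
    proof (cases "x < 4")
      case True
      show False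
      proof (cases "x \<le> 2")
        case True
        then have "Q > 0" unfolding Q_def using x1 by (intro Q_pos) simp
        then show False using Q0 by simp
      next
        case False
        have "121*x - 196 > 0" using False by simp
        moreover have "(x-76)*(x-4) > 0" using \<open>x < 4\<close> by (simp add: mult_neg_neg)
        moreover have "x - 364 < 0" using \<open>x < 4\<close> by simp
        ultimately have "\<Pi> < 0" unfolding \<Pi>_def
          by (metis mult.assoc mult_pos_neg mult_pos_pos)
        then show False using Pi0 by simp
      qed
    next
      case False
      then have x76: "x > 76" using out n4 n76 by auto
      show False
      proof (cases "x < 364")
        case True
        have "121*x - 196 > 0" using x76 by simp
        moreover have "(x-76)*(x-4) > 0" using x76 by simp
        moreover have "x - 364 < 0" using True by simp
        ultimately have "\<Pi> < 0" unfolding \<Pi>_def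
          by (metis mult.assoc mult_pos_neg mult_pos_pos)
        then show False using Pi0 by simp
      next
        case False
        then have "Q > 0" unfolding Q_def by (intro Q_pos) simp
        then show False using Q0 by simp
      qed
    qed
  qed
  then show ?thesis
  proof
    assume "G1 < 0"
    then have "(\<rho>1 - 4)*(\<rho>1 - 76) * D^2 < 0" using g1 by simp
    then have "(\<rho>1 - 4)*(\<rho>1 - 76) < 0" using D0 by (simp add: mult_less_0_iff)
    then have "4 < \<rho>1 \<and> \<rho>1 < 76" by (rule prod_neg_between)
    then show ?thesis unfolding \<rho>1_def by (intro exI[of _ 250]) simp
  next
    assume "G2 < 0"
    then have "(\<rho>2 - 4)*(\<rho>2 - 76) * D^2 < 0" using g2 by simp
    then have "(\<rho>2 - 4)*(\<rho>2 - 76) < 0" using D0 by (simp add: mult_less_0_iff)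
    then have "4 < \<rho>2 \<and> \<rho>2 < 76" by (rule prod_neg_between)
    then show ?thesis unfolding \<rho>2_def by (intro exI[of _ "-250"]) simp
  qed
qed

definition stepf :: "int \<times> int \<times> int \<Rightarrow> int \<times> int \<times> int" where
  "stepf p = (case p of (X,Y,Z) \<Rightarrow>
     (X^4 - 192*X^2*Z^4 + 1280*X*Z^6 + 49536*Z^8,
      (3*X^2 + 126*X*Z^2 + 96*Z^4)*(4*X*Y^2 - (X^4 - 192*X^2*Z^4 + 1280*X*Z^6 + 49536*Z^8)) - 8*Y^4,
      2*Y*Z))"

primrec sqn :: "nat \<Rightarrow> int \<times> int \<times> int" where
  "sqn 0 = (-11, 45, 2)"
| "sqn (Suc n) = stepf (sqn n)"

definition invp :: "nat \<Rightarrow> int \<times> int \<times> int \<Rightarrow> bool" where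
  "invp n p = (case p of (X,Y,Z) \<Rightarrow>
     Y^2 = X^3 + 63*X^2*Z^2 + 96*X*Z^4 - 160*Z^6 \<and> odd X \<and> odd Y \<and>
     (\<exists>k. odd k \<and> Z = 2^(n+1)*k))"

lemma dbl_curve:
  fixes X Y Z :: int
  assumes h: "Y^2 = X^3 + 63*X^2*Z^2 + 96*X*Z^4 - 160*Z^6"
  defines "X' \<equiv> X^4 - 192*X^2*Z^4 + 1280*X*Z^6 + 49536*Z^8"
  defines "Z' \<equiv> 2*Y*Z"
  defines "Y' \<equiv> (3*X^2 + 126*X*Z^2 + 96*Z^4)*(4*X*Y^2 - X') - 8*Y^4"
  shows "Y'^2 = X'^3 + 63*X'^2*Z'^2 + 96*X'*Z'^4 - 160*Z'^6"
proof -
  have e4: "Y^4 = (Y^2)^2" by simp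
  have e6: "Y^6 = (Y^2)^3" by simp
  have e8: "Y^8 = (Y^2)^4" by simp
  show ?thesis unfolding X'_def Z'_def Y'_def
    apply (simp only: power_mult_distrib e4 e6 e8)
    apply (simp only: h)
    by algebra
qed

lemma dbl_ge1:
  fixes X Y Z :: int
  assumes h: "Y^2 = X^3 + 63*X^2*Z^2 + 96*X*Z^4 - 160*Z^6"
  shows "(X^4 - 192*X^2*Z^4 + 1280*X*Z^6 + 49536*Z^8) - (2*Y*Z)^2 = (X^2 - 2*X*Z^2 - 224*Z^4)^2"
proof -
  have eq: "(2*Y*Z)^2 = 4*Z^2*(X^3 + 63*X^2*Z^2 + 96*X*Z^4 - 160*Z^6)"
    using h by (simp add: power_mult_distrib)
  show ?thesis unfolding eq by algebra
qed

lemma step_inv: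
  assumes "invp n p" shows "invp (Suc n) (stepf p)"
proof -
  obtain X Y Z where p: "p = (X,Y,Z)" by (cases p) auto
  from assms have h: "Y^2 = X^3 + 63*X^2*Z^2 + 96*X*Z^4 - 160*Z^6" and oX: "odd X" and oY: "odd Y"
    and kZ: "\<exists>k. odd k \<and> Z = 2^(n+1)*k" unfolding invp_def p by auto
  obtain k where ok: "odd k" and Zk: "Z = 2^(n+1)*k" using kZ by blast
  have eZ: "even Z" using Zk by simp
  define X' where "X' = X^4 - 192*X^2*Z^4 + 1280*X*Z^6 + 49536*Z^8"
  define Z' where "Z' = 2*Y*Z"
  define Y' where "Y' = (3*X^2 + 126*X*Z^2 + 96*Z^4)*(4*X*Y^2 - X') - 8*Y^4"
  have sp: "stepf p = (X', Y', Z')" unfolding p stepf_def X'_def Y'_def Z'_def by simp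
  have c: "Y'^2 = X'^3 + 63*X'^2*Z'^2 + 96*X'*Z'^4 - 160*Z'^6"
    unfolding X'_def Y'_def Z'_def by (rule dbl_curve[OF h])
  have oX': "odd X'" unfolding X'_def using oX eZ by simp
  have eZ': "even Z'" unfolding Z'_def by simp
  have "odd (Y'^2)" unfolding c using oX' eZ' by simp
  then have oY': "odd Y'" by simp
  have "odd (Y*k)" using oY ok by simp
  moreover have "Z' = 2^(Suc n + 1)*(Y*k)" unfolding Z'_def Zk by (simp add: algebra_simps)
  ultimately have "\<exists>k. odd k \<and> Z' = 2^(Suc n + 1)*k" by blast
  then show ?thesis unfolding invp_def sp using c oX' oY' by simp
qed

lemma sqn_inv: "invp n (sqn n)"
proof (induction n)
  case 0
  have "(45::int)^2 = (-11)^3 + 63*(-11)^2*2^2 + 96*(-11)*2^4 - 160*2^6" by simp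
  moreover have "\<exists>k::int. odd k \<and> 2 = 2^(0+1)*k" by (rule exI[of _ 1]) simp
  ultimately show ?case unfolding invp_def by simp
next
  case (Suc n)
  then show ?case by (simp add: step_inv)
qed

lemma sqn_ge1:
  obtains X Y Z where "sqn (Suc n) = (X,Y,Z)" "X - Z^2 \<ge> 0"
proof -
  obtain X Y Z where p: "sqn n = (X,Y,Z)" by (cases "sqn n") auto
  have h: "Y^2 = X^3 + 63*X^2*Z^2 + 96*X*Z^4 - 160*Z^6" using sqn_inv[of n] unfolding invp_def p by simp
  have "sqn (Suc n) = (X^4 - 192*X^2*Z^4 + 1280*X*Z^6 + 49536*Z^8,
      (3*X^2 + 126*X*Z^2 + 96*Z^4)*(4*X*Y^2 - (X^4 - 192*X^2*Z^4 + 1280*X*Z^6 + 49536*Z^8)) - 8*Y^4,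
      2*Y*Z)" by (simp add: p stepf_def)
  moreover have "(X^4 - 192*X^2*Z^4 + 1280*X*Z^6 + 49536*Z^8) - (2*Y*Z)^2 \<ge> 0"
    unfolding dbl_ge1[OF h] by simp
  ultimately show ?thesis using that by blast
qed

definition pv :: "nat \<Rightarrow> rat \<Rightarrow> bool" where
  "pv k q \<longleftrightarrow> (\<exists>a b::int. odd a \<and> odd b \<and> q = of_int a * 2^k / of_int b)"
definition nv :: "nat \<Rightarrow> rat \<Rightarrow> bool" where
  "nv k q \<longleftrightarrow> (\<exists>a b::int. odd a \<and> odd b \<and> q = of_int a / (of_int b * 2^k))"

lemma core2:
  fixes a b :: int
  assumes "odd a" "odd b" "a * 2^k = b * 2^j"
  shows "k = j"
proof (rule ccontr)
  assume "k \<noteq> j"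
  then consider "k < j" | "j < k" by linarith
  then show False
  proof cases
    case 1
    then have "(2::int)^j = 2^k * 2^(j-k)" by (simp add: power_add[symmetric])
    then have "a * 2^k = (b * 2^(j-k)) * 2^k" using assms(3) by simp
    then have "a = b * 2^(j-k)" by simp
    moreover have "even (b * 2^(j-k))" using 1 by simp
    ultimately show False using assms(1) by simp
  next
    case 2
    then have "(2::int)^k = 2^j * 2^(k-j)" by (simp add: power_add[symmetric])
    then have "b * 2^j = (a * 2^(k-j)) * 2^j" using assms(3) by simp
    then have "b = a * 2^(k-j)" by simp
    moreover have "even (a * 2^(k-j))" using 2 by simp
    ultimately show False using assms(2) by simp
  qed
qed

lemma to_int_eq:
  fixes a b c d :: int
  assumes "(of_int a * 2^k * of_int d :: rat) = of_int c * 2^j * of_int b"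
  shows "(a*d)*2^k = (c*b)*2^j"
proof -
  have "(of_int ((a*d)*2^k) :: rat) = of_int ((c*b)*2^j)"
    unfolding of_int_mult of_int_power of_int_numeral using assms by (simp only: ac_simps)
  then show ?thesis by (simp only: of_int_eq_iff)
qed

lemma pv_uniq: assumes "pv k q" "pv j q" shows "k = j"
proof -
  obtain a b where ab: "odd a" "odd b" "q = of_int a * 2^k / of_int b" using assms(1) pv_def by auto
  obtain c d where cd: "odd c" "odd d" "q = of_int c * 2^j / of_int d" using assms(2) pv_def by auto
  have b0: "(of_int b::rat) \<noteq> 0" and d0: "(of_int d::rat) \<noteq> 0" using ab(2) cd(2) by auto
  have "(of_int a * 2^k / of_int b :: rat) = of_int c * 2^j / of_int d" using ab(3) cd(3) by simp
  then have "(of_int a * 2^k * of_int d :: rat) = of_int c * 2^j * of_int b" using frac_eq_eq[OF b0 d0] by blast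
  then have e: "(a*d)*2^k = (c*b)*2^j" by (rule to_int_eq)
  have "odd (a*d)" "odd (c*b)" using ab(1,2) cd(1,2) by simp_all
  then show ?thesis using core2 e by blast
qed

lemma nv_uniq: assumes "nv k q" "nv j q" shows "k = j"
proof -
  obtain a b where ab: "odd a" "odd b" "q = of_int a / (of_int b * 2^k)" using assms(1) nv_def by auto
  obtain c d where cd: "odd c" "odd d" "q = of_int c / (of_int d * 2^j)" using assms(2) nv_def by auto
  have b0: "(of_int b * 2^k::rat) \<noteq> 0" and d0: "(of_int d * 2^j::rat) \<noteq> 0" using ab(2) cd(2) by auto
  have "(of_int a / (of_int b * 2^k) :: rat) = of_int c / (of_int d * 2^j)" using ab(3) cd(3) by simp
  then have "(of_int a * (of_int d * 2^j) :: rat) = of_int c * (of_int b * 2^k)" using frac_eq_eq[OF b0 d0] by blast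
  then have "(of_int a * 2^j * of_int d :: rat) = of_int c * 2^k * of_int b" by (simp only: ac_simps)
  then have e: "(a*d)*2^j = (c*b)*2^k" by (rule to_int_eq)
  have "odd (a*d)" "odd (c*b)" using ab(1,2) cd(1,2) by simp_all
  then show ?thesis using core2 e by blast
qed

lemma pv_nv: assumes "pv k q" "nv j q" shows "k + j = 0"
proof -
  obtain a b where ab: "odd a" "odd b" "q = of_int a * 2^k / of_int b" using assms(1) pv_def by auto
  obtain c d where cd: "odd c" "odd d" "q = of_int c / (of_int d * 2^j)" using assms(2) nv_def by auto
  have b0: "(of_int b::rat) \<noteq> 0" and d0: "(of_int d * 2^j::rat) \<noteq> 0" using ab(2) cd(2) by auto
  have "(of_int a * 2^k / of_int b :: rat) = of_int c / (of_int d * 2^j)" using ab(3) cd(3) by simp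
  then have "(of_int a * 2^k * (of_int d * 2^j) :: rat) = of_int c * of_int b" using frac_eq_eq[OF b0 d0] by blast
  then have "(of_int a * 2^(k+j) * of_int d :: rat) = of_int c * 2^0 * of_int b"
    by (simp only: ac_simps power_add power_0 mult_1_right)
  then have e: "(a*d)*2^(k+j) = (c*b)*2^0" by (rule to_int_eq)
  have "odd (a*d)" "odd (c*b)" using ab(1,2) cd(1,2) by simp_all
  then show ?thesis using core2 e by blast
qed

lemma x3_val:
  fixes X Y Z s :: rat
  assumes h: "Y^2 = X^3 + 63*X^2*Z^2 + 96*X*Z^4 - 160*Z^6" and s2: "s^2 = 62500"
    and Z0: "Z \<noteq> 0" and M0: "X - 26*Z^2 \<noteq> 0"
  shows "((Y/Z^3 - s)/(X/Z^2 - 26))^2 - 89 - X/Z^2 - 26 = Z*(-2*s*Y + 5400*X*Z - 15400*Z^3)/(X - 26*Z^2)^2"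
proof -
  define M where "M = X - 26*Z^2"
  have M0': "M \<noteq> 0" using M0 unfolding M_def .
  have e1: "(Y/Z^3 - s)/(X/Z^2 - 26) = (Y - s*Z^3)/(Z*M)"
  proof -
    have a: "Y/Z^3 - s = (Y - s*Z^3)/Z^3" using Z0 by (simp add: field_simps)
    have b: "X/Z^2 - 26 = M/Z^2" unfolding M_def using Z0 by (simp add: field_simps)
    have "(Y/Z^3 - s)/(X/Z^2 - 26) = ((Y - s*Z^3)/Z^3)/(M/Z^2)" unfolding a b ..
    also have "\<dots> = (Y - s*Z^3)/(Z*M)" using Z0 M0' by (simp add: field_simps power3_eq_cube power2_eq_square)
    finally show ?thesis .
  qed
  have e3: "(Y - s*Z^3)^2 - (115*Z^2 + X)*M^2 = Z^3*(-2*s*Y + 5400*X*Z - 15400*Z^3)"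
    unfolding M_def using h s2 by algebra
  have "((Y/Z^3 - s)/(X/Z^2 - 26))^2 - 89 - X/Z^2 - 26 = ((Y - s*Z^3)^2 - (115*Z^2 + X)*M^2)/(Z^2*M^2)"
    unfolding e1 using Z0 M0' by (simp add: field_simps power2_eq_square)
  also have "\<dots> = Z^3*(-2*s*Y + 5400*X*Z - 15400*Z^3)/(Z^2*M^2)" unfolding e3 ..
  also have "\<dots> = Z*(-2*s*Y + 5400*X*Z - 15400*Z^3)/M^2" using Z0 M0'
    by (simp add: power2_eq_square power3_eq_cube)
  finally show ?thesis unfolding M_def .
qed

lemma s_cases: fixes s :: rat assumes "s^2 = 62500" shows "s = 250 \<or> s = -250"
proof -
  have "(s - 250)*(s + 250) = 0" using assms by (simp add: algebra_simps power2_eq_square)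
  then show ?thesis by (simp add: eq_neg_iff_add_eq_0)
qed

lemma per_n:
  "\<exists>c. (\<exists>r u v t. r > 0 \<and> u^2 = r^2+r+4 \<and> v^2 = 4*r^2+r+1 \<and> (1+r)*t^2+4*t-r = 0
           \<and> c = 8*t^2+28*t-4*v*(1-t^2)) \<and> (nv (2*(n+2)) (c - 26) \<or> pv (n+4) (c - 26))"
proof -
  obtain X Y Z where p: "sqn (Suc n) = (X,Y,Z)" and ge: "X - Z^2 \<ge> 0" by (rule sqn_ge1)
  have iv: "invp (Suc n) (X,Y,Z)" using sqn_inv[of "Suc n"] unfolding p .
  then have h: "Y^2 = X^3 + 63*X^2*Z^2 + 96*X*Z^4 - 160*Z^6" and oX: "odd X" and oY: "odd Y"
    and kZ: "\<exists>k. odd k \<and> Z = 2^(Suc n+1)*k" unfolding invp_def by auto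
  obtain k where ok: "odd k" and Zk: "Z = 2^(n+2)*k" using kZ by auto
  have eZ: "even Z" using Zk by simp
  have Z0: "Z \<noteq> 0" using Zk ok by auto
  define Xr where "Xr = (of_int X :: rat)"
  define Yr where "Yr = (of_int Y :: rat)"
  define Zr where "Zr = (of_int Z :: rat)"
  have Zr0: "Zr \<noteq> 0" unfolding Zr_def using Z0 by simp
  have hr: "Yr^2 = Xr^3 + 63*Xr^2*Zr^2 + 96*Xr*Zr^4 - 160*Zr^6"
  proof -
    have "(of_int (Y^2) :: rat) = of_int (X^3 + 63*X^2*Z^2 + 96*X*Z^4 - 160*Z^6)" using h by simp
    then show ?thesis unfolding Xr_def Yr_def Zr_def by simp
  qed
  define M where "M = X - 26*Z^2"
  have oM: "odd M" unfolding M_def using oX eZ by simp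
  have Mr: "Xr - 26*Zr^2 = of_int M" unfolding M_def Xr_def Zr_def by simp
  have M0: "M \<noteq> 0" using oM by auto
  have Mr0: "Xr - 26*Zr^2 \<noteq> 0" unfolding Mr using M0 by simp
  define x where "x = Xr/Zr^2"
  define y where "y = Yr/Zr^3"
  have cur: "y^2 = x^3 + 63*x^2 + 96*x - 160"
  proof -
    have "y^2 = Yr^2/Zr^6" unfolding y_def by (simp add: power_divide power_mult[symmetric])
    also have "\<dots> = (Xr^3 + 63*Xr^2*Zr^2 + 96*Xr*Zr^4 - 160*Zr^6)/Zr^6" unfolding hr ..
    also have "\<dots> = x^3 + 63*x^2 + 96*x - 160" unfolding x_def using Zr0
      by (simp add: field_simps power_divide; algebra)
    finally show ?thesis .
  qed
  have Zr2: "Zr^2 > 0" using Zr0 by simp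
  have x1: "x \<ge> 1"
  proof -
    have "Xr \<ge> Zr^2" unfolding Xr_def Zr_def using ge by (metis diff_ge_0_iff_ge of_int_le_iff of_int_power)
    then show ?thesis unfolding x_def using Zr2 by simp
  qed
  have x26: "x - 26 = of_int M / Zr^2" unfolding x_def Mr[symmetric] using Zr0 by (simp add: field_simps)
  have p2: "(2::rat)^(2*(n+2)) = (2^(n+2))^2" by (metis power_mult mult.commute)
  have Zr2k: "Zr^2 = of_int (k^2) * 2^(2*(n+2))" unfolding p2 Zr_def Zk by (simp add: power_mult_distrib)
  show ?thesis
  proof (cases "4 < x \<and> x < 76")
    case True
    obtain r u v t where rt: "r > 0 \<and> u^2 = r^2+r+4 \<and> v^2 = 4*r^2+r+1 \<and> (1+r)*t^2+4*t-r = 0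
           \<and> x = 8*t^2+28*t-4*v*(1-t^2)" using W_to_E[OF cur] True by blast
    have "nv (2*(n+2)) (x - 26)" unfolding nv_def x26 Zr2k
      by (rule exI[of _ M], rule exI[of _ "k^2"]) (simp add: oM ok)
    then show ?thesis using rt by blast
  next
    case False
    have n4: "x \<noteq> 4"
    proof
      assume "x = 4"
      then have "Xr = 4*Zr^2" unfolding x_def using Zr0 by (simp add: field_simps)
      then have "(of_int X :: rat) = of_int (4*Z^2)" unfolding Xr_def Zr_def by simp
      then have "X = 4*Z^2" by (simp only: of_int_eq_iff)
      then show False using oX by simp
    qed
    have n76: "x \<noteq> 76"
    proof
      assume "x = 76"
      then have "Xr = 76*Zr^2" unfolding x_def using Zr0 by (simp add: field_simps)
      then have "(of_int X :: rat) = of_int (76*Z^2)" unfolding Xr_def Zr_def by simp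
      then have "X = 76*Z^2" by (simp only: of_int_eq_iff)
      then show False using oX by simp
    qed
    obtain s where s2: "s^2 = 62500" and rho: "4 < ((y-s)/(x-26))^2 - 89 - x" "((y-s)/(x-26))^2 - 89 - x < 76"
      using cover[OF cur x1 False n4 n76] by blast
    have xn26: "x \<noteq> 26" using False by auto
    define L where "L = (y-s)/(x-26)"
    define x3 where "x3 = L^2 - 89 - x"
    have yL: "y = s + L*(x-26)" unfolding L_def using xn26 by simp
    have c3: "(-(y + L*(x3 - x)))^2 = x3^3 + 63*x3^2 + 96*x3 - 160"
      unfolding x3_def by (rule add_curve[OF cur s2 xn26 yL])
    have x3r: "4 < x3" "x3 < 76" unfolding x3_def L_def using rho by auto
    obtain r u v t where rt: "r > 0 \<and> u^2 = r^2+r+4 \<and> v^2 = 4*r^2+r+1 \<and> (1+r)*t^2+4*t-r = 0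
           \<and> x3 = 8*t^2+28*t-4*v*(1-t^2)" using W_to_E[OF c3 x3r] by blast
    have val: "x3 - 26 = Zr*(-2*s*Yr + 5400*Xr*Zr - 15400*Zr^3)/(Xr - 26*Zr^2)^2"
      unfolding x3_def L_def x_def y_def using x3_val[OF hr s2 Zr0 Mr0] by simp
    obtain w where ow: "odd w" and wr: "-2*s*Yr + 5400*Xr*Zr - 15400*Zr^3 = 4 * of_int w"
    proof (cases "s = 250")
      case True
      have "odd (-125*Y + 1350*X*Z - 3850*Z^3)" using oY eZ by simp
      moreover have "-2*s*Yr + 5400*Xr*Zr - 15400*Zr^3 = 4 * of_int (-125*Y + 1350*X*Z - 3850*Z^3)"
        unfolding True Xr_def Yr_def Zr_def by simp
      ultimately show ?thesis using that by blast
    next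
      case False
      then have sm: "s = -250" using s_cases[OF s2] by simp
      have "odd (125*Y + 1350*X*Z - 3850*Z^3)" using oY eZ by simp
      moreover have "-2*s*Yr + 5400*Xr*Zr - 15400*Zr^3 = 4 * of_int (125*Y + 1350*X*Z - 3850*Z^3)"
        unfolding sm Xr_def Yr_def Zr_def by simp
      ultimately show ?thesis using that by blast
    qed
    have "x3 - 26 = of_int (k*w) * 2^(n+4) / of_int (M^2)"
    proof -
      have "x3 - 26 = Zr * (4 * of_int w) / (of_int M)^2" unfolding val wr Mr ..
      also have "\<dots> = of_int (k*w) * 2^(n+4) / of_int (M^2)" unfolding Zr_def Zk
        by (simp add: power_add)
      finally show ?thesis .
    qed
    then have "pv (n+4) (x3 - 26)" unfolding pv_def
      by (intro exI[of _ "k*w"] exI[of _ "M^2"]) (simp add: ok ow oM)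
    then show ?thesis using rt by blast
  qed
qed

theorem mainTheorem4:
  shows "infinite {r :: rat. r > 1 \<and> good_ratio r}"
proof
  assume fin: "finite {r :: rat. r > 1 \<and> good_ratio r}"
  define G where "G = {r :: rat. r > 1 \<and> good_ratio r}"
  define R where "R = G \<union> (\<lambda>s. 1/s) ` G"
  have finR: "finite R" unfolding R_def G_def using fin by simp
  define fib where "fib = (\<lambda>r::rat. {c. \<exists>t v. (1+r)*t^2 + 4*t - r = 0 \<and> v^2 = 4*r^2+r+1 \<and> c = 8*t^2+28*t-4*v*(1-t^2)})"
  have finU: "finite (\<Union>r\<in>R. fib r)" using finR fib_fin unfolding fib_def by blast
  obtain c where hc: "\<And>n. (\<exists>r u v t. r > 0 \<and> u^2 = r^2+r+4 \<and> v^2 = 4*r^2+r+1 \<and> (1+r)*t^2+4*t-r = 0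
           \<and> c n = 8*t^2+28*t-4*v*(1-t^2)) \<and> (nv (2*(n+2)) (c n - 26) \<or> pv (n+4) (c n - 26))"
  proof -
    have "\<forall>n. \<exists>c. (\<exists>r u v t. r > 0 \<and> u^2 = r^2+r+4 \<and> v^2 = 4*r^2+r+1 \<and> (1+r)*t^2+4*t-r = 0
           \<and> c = 8*t^2+28*t-4*v*(1-t^2)) \<and> (nv (2*(n+2)) (c - 26) \<or> pv (n+4) (c - 26))"
      using per_n by blast
    then obtain c where "\<forall>n. (\<exists>r u v t. r > 0 \<and> u^2 = r^2+r+4 \<and> v^2 = 4*r^2+r+1 \<and> (1+r)*t^2+4*t-r = 0
           \<and> c n = 8*t^2+28*t-4*v*(1-t^2)) \<and> (nv (2*(n+2)) (c n - 26) \<or> pv (n+4) (c n - 26))"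
      by (rule choice[THEN exE]) blast
    then show ?thesis using that by blast
  qed
  have inj: "inj c"
  proof (rule injI)
    fix n m assume e: "c n = c m"
    have vn: "nv (2*(n+2)) (c n - 26) \<or> pv (n+4) (c n - 26)" using hc by blast
    have vm: "nv (2*(m+2)) (c n - 26) \<or> pv (m+4) (c n - 26)" using hc[of m] e by simp
    from vn vm show "n = m"
    proof (elim disjE)
      assume "nv (2*(n+2)) (c n - 26)" "nv (2*(m+2)) (c n - 26)"
      then show ?thesis using nv_uniq by fastforce
    next
      assume "nv (2*(n+2)) (c n - 26)" "pv (m+4) (c n - 26)"
      then show ?thesis using pv_nv by fastforce
    next
      assume "pv (n+4) (c n - 26)" "nv (2*(m+2)) (c n - 26)"
      then show ?thesis using pv_nv by fastforce
    next
      assume "pv (n+4) (c n - 26)" "pv (m+4) (c n - 26)"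
      then show ?thesis using pv_uniq by fastforce
    qed
  qed
  have sub: "range c \<subseteq> (\<Union>r\<in>R. fib r)"
  proof
    fix z assume "z \<in> range c"
    then obtain n where zn: "z = c n" by auto
    obtain r u v t where rt: "r > 0" "u^2 = r^2+r+4" "v^2 = 4*r^2+r+1" "(1+r)*t^2+4*t-r = 0"
      "c n = 8*t^2+28*t-4*v*(1-t^2)" using hc[of n] by blast
    have zf: "z \<in> fib r" unfolding fib_def zn using rt by blast
    have r1: "r \<noteq> 1"
    proof
      assume "r = 1" then have "u^2 = 6" using rt(2) by simp
      then show False using no_sqrt6 by blast
    qed
    have "r \<in> R"
    proof (cases "r > 1")
      case True
      then have "good_ratio r" using good_of_E rt by blast
      then show ?thesis unfolding R_def G_def using True by blast
    next
      case False
      then have rl: "r < 1" using r1 by simp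
      have i1: "1/r > 1" using rl rt(1) by simp
      have "good_ratio (1/r)" using good_of_E[OF i1] E_inv[OF rt(1) rt(2) rt(3)] by blast
      then have "1/r \<in> G" unfolding G_def using i1 by blast
      moreover have "r = 1/(1/r)" by simp
      ultimately show ?thesis unfolding R_def by blast
    qed
    then show "z \<in> (\<Union>r\<in>R. fib r)" using zf by blast
  qed
  have "finite (range c)" using finite_subset[OF sub finU] .
  then have "finite (UNIV :: nat set)" using inj finite_imageD by blast
  then show False by simp
qed

end
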